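(* Let $E$ be a finite-dimensional vector space of dimension $d\ge 2$ over a local field and let $\nu$ be a probability distribution on $\mathrm{End}(E)$. The set $\underline{\ker}(\nu)$ is a countable union of subspaces of $E$ each of dimension at most $\dim(E)-\underline{\mathrm{rank}}(\nu)$.
   Context: $\nu^{*n}$ is the law of a product of $n$ i.i.d. $\nu$-distributed endomorphisms. $\underline{\mathrm{rank}}(\nu)$ is the largest integer $r$ with $\nu^{*n}\{\gamma:\mathrm{rank}(\gamma)<r\}=0$ for all $n\ge0$. $\underline{\ker}(\nu)=\{v\in E:\exists n\ge0,\ \nu^{*n}\{h:hv=0\}>0\}$. *)

theory Defs
  imports "HOL-Probability.Probability"
begin

text \<open>A local field: a Hausdorff topological field which is locally compact and
  non-discrete. (Second countability, which every local field enjoys, is imposed as a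
  type class constraint in the statement.)\<close>
definition local_field :: "'k::{field,topological_space} itself \<Rightarrow> bool" where
  "local_field _ \<longleftrightarrow>
     continuous_on UNIV (\<lambda>p::'k \<times> 'k. fst p + snd p) \<and>
     continuous_on UNIV (\<lambda>p::'k \<times> 'k. fst p * snd p) \<and>
     continuous_on UNIV (\<lambda>x::'k. - x) \<and>
     continuous_on (- {0}) (\<lambda>x::'k. inverse x) \<and>
     (\<forall>x::'k. \<exists>U C. open U \<and> compact C \<and> x \<in> U \<and> U \<subseteq> C) \<and>
     (\<forall>x::'k. \<not> open {x})"

text \<open>Endomorphisms of E = K^n are n x n matrices acting by matrix-vector product.
  \<open>mat_conv_pow \<nu> n\<close> is the law of a product of n i.i.d. \<open>\<nu>\<close>-distributed matrices
  (the identity for n = 0).\<close>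
primrec mat_conv_pow ::
  "('k::{field,topological_space} ^'n::finite^'n) measure \<Rightarrow> nat \<Rightarrow> ('k^'n^'n) measure" where
  "mat_conv_pow \<nu> 0 = return borel (mat 1)"
| "mat_conv_pow \<nu> (Suc n) = distr (mat_conv_pow \<nu> n \<Otimes>\<^sub>M \<nu>) borel (\<lambda>(g, h). g ** h)"

definition lower_rank :: "('k::{field,topological_space} ^'n::finite^'n) measure \<Rightarrow> nat" where
  "lower_rank \<nu> = (GREATEST r. \<forall>n. emeasure (mat_conv_pow \<nu> n) {\<gamma>. rank \<gamma> < r} = 0)"

definition lower_ker :: "('k::{field,topological_space} ^'n::finite^'n) measure \<Rightarrow> ('k^'n) set" where
  "lower_ker \<nu> = {v. \<exists>n. emeasure (mat_conv_pow \<nu> n) {h. h *v v = 0} > 0}"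

end

theory Submission
  imports Defs
begin


locale lf_cont =
  fixes T :: "'k::{field,t2_space} itself"
  assumes cadd: "continuous_on UNIV (\<lambda>p::'k \<times> 'k. fst p + snd p)"
    and cmul: "continuous_on UNIV (\<lambda>p::'k \<times> 'k. fst p * snd p)"
begin

lemma c_add:
  fixes f g :: "'x::topological_space \<Rightarrow> 'k"
  assumes "continuous_on UNIV f" "continuous_on UNIV g"
  shows "continuous_on UNIV (\<lambda>x. f x + g x)"
  using continuous_on_compose2[OF cadd continuous_on_Pair[OF assms]] by simp

lemma c_mul:
  fixes f g :: "'x::topological_space \<Rightarrow> 'k"
  assumes "continuous_on UNIV f" "continuous_on UNIV g"
  shows "continuous_on UNIV (\<lambda>x. f x * g x)"
  using continuous_on_compose2[OF cmul continuous_on_Pair[OF assms]] by simp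

lemma c_sum:
  fixes f :: "'i \<Rightarrow> 'x::topological_space \<Rightarrow> 'k"
  assumes "finite I" "\<And>i. i \<in> I \<Longrightarrow> continuous_on UNIV (f i)"
  shows "continuous_on UNIV (\<lambda>x. \<Sum>i\<in>I. f i x)"
  using assms by (induction I rule: finite_induct) (auto intro!: c_add)

lemma c_prod:
  fixes f :: "'i \<Rightarrow> 'x::topological_space \<Rightarrow> 'k"
  assumes "finite I" "\<And>i. i \<in> I \<Longrightarrow> continuous_on UNIV (f i)"
  shows "continuous_on UNIV (\<lambda>x. \<Prod>i\<in>I. f i x)"
  using assms by (induction I rule: finite_induct) (auto intro!: c_mul)

lemma c_nth:
  assumes "continuous_on UNIV f"
  shows "continuous_on UNIV (\<lambda>x. f x $ i)"
  using assms unfolding continuous_on_def by (auto intro: tendsto_vec_nth)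

lemma c_entry: "continuous_on UNIV (\<lambda>g::'k^'n::finite^'m::finite. g $ i $ j)"
  by (intro c_nth continuous_on_id)

lemma c_det:
  fixes F :: "'x::topological_space \<Rightarrow> 'k^'n::finite^'n"
  assumes "\<And>i j. continuous_on UNIV (\<lambda>x. F x $ i $ j)"
  shows "continuous_on UNIV (\<lambda>x. det (F x))"
  unfolding det_def
  by (intro c_sum c_mul c_prod continuous_on_const assms) auto

lemma closed_det:
  "closed {g::'k^'n::finite^'n. det (A ** g ** B + N) = 0}"
proof -
  have "continuous_on UNIV (\<lambda>g::'k^'n^'n. det (A ** g ** B + N))"
    by (rule c_det) (auto simp: matrix_matrix_mult_def
        intro!: c_add c_sum c_mul continuous_on_const c_entry)
  then show ?thesis by (intro closed_Collect_eq continuous_on_const)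
qed

lemma closed_ker: "closed {h::'k^'n::finite^'m::finite. h *v v = 0}"
proof -
  have "{h::'k^'n^'m. h *v v = 0} = (\<Inter>i. {h. (\<Sum>j\<in>UNIV. h $ i $ j * v $ j) = 0})"
    by (auto simp: vec_eq_iff matrix_vector_mult_def)
  moreover have "closed {h::'k^'n^'m. (\<Sum>j\<in>UNIV. h $ i $ j * v $ j) = 0}" for i
    by (intro closed_Collect_eq continuous_on_const c_sum c_mul c_entry) auto
  ultimately show ?thesis by auto
qed

end

lemma lf_contI: "local_field TYPE('k::{field,t2_space}) \<Longrightarrow> lf_cont TYPE('k)"
  unfolding local_field_def lf_cont_def by blast



lemma rank_le_card: "rank (h::'k::field^'n::finite^'m::finite) \<le> CARD('n)"
  unfolding row_rank_def_gen by (rule dim_subset_UNIV_cart_gen)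

lemma row_mult_left: "row i (A ** X) = (\<Sum>k\<in>UNIV. A$i$k *s row k X)"
  by (simp add: vec_eq_iff matrix_matrix_mult_def row_def sum_component mult.commute)

lemma rank_mul_left_gen: "rank (A ** (X::'k::field^'n::finite^'m::finite)) \<le> rank X"
proof -
  have "rows (A ** X) \<subseteq> vec.span (rows X)"
  proof
    fix r assume "r \<in> rows (A ** X)"
    then obtain i where r: "r = row i (A ** X)" by (auto simp: rows_def)
    show "r \<in> vec.span (rows X)" unfolding r row_mult_left
      by (intro vec.span_sum vec.span_scale vec.span_base) (auto simp: rows_def)
  qed
  then show ?thesis unfolding row_rank_def_gen by (rule vec.dim_mono)
qed

lemma row_mult_right: "row i ((X::'k::field^'n::finite^'m::finite) ** B) = transpose B *v row i X"
  by (auto simp: vec_eq_iff matrix_matrix_mult_def row_def matrix_vector_mult_def transpose_def intro!: sum.cong mult.commute)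

lemma rank_mul_right_gen: "rank ((X::'k::field^'n::finite^'m::finite) ** B) \<le> rank X"
proof -
  have "rows (X ** B) = (\<lambda>r. transpose B *v r) ` rows X"
    by (auto simp: rows_def row_mult_right)
  then show ?thesis unfolding row_rank_def_gen
    using vec.dim_image_le[OF matrix_vector_mul_linear_gen[of "transpose B"], of "rows X"] by simp
qed

lemma rank_add_gen: "rank ((X::'k::field^'n::finite^'m::finite) + Y) \<le> rank X + rank Y"
proof -
  let ?S = "vec.span (rows X)" and ?T = "vec.span (rows Y)"
  have "rows (X + Y) \<subseteq> {x + y |x y. x \<in> ?S \<and> y \<in> ?T}"
  proof
    fix r assume "r \<in> rows (X + Y)"
    then obtain i where r: "r = row i (X + Y)" by (auto simp: rows_def)
    have "r = row i X + row i Y" unfolding r by (simp add: vec_eq_iff row_def)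
    moreover have "row i X \<in> ?S" "row i Y \<in> ?T"
      by (auto intro!: vec.span_base simp: rows_def)
    ultimately show "r \<in> {x + y |x y. x \<in> ?S \<and> y \<in> ?T}" by blast
  qed
  then have "vec.dim (rows (X + Y)) \<le> vec.dim {x + y |x y. x \<in> ?S \<and> y \<in> ?T}"
    by (rule vec.dim_subset)
  also have "\<dots> \<le> vec.dim ?S + vec.dim ?T"
    using vec.dim_sums_Int[of ?S ?T] by simp
  finally show ?thesis unfolding row_rank_def_gen by simp
qed

lemma rank_full_if_det: "det (X::'k::field^'n::finite^'n) \<noteq> 0 \<Longrightarrow> CARD('n) \<le> rank X"
proof -
  assume "det X \<noteq> 0"
  then have "invertible X" by (simp add: invertible_det_nz)
  then have "vec.span (rows X) = UNIV"
    using invertible_left_inverse matrix_left_invertible_span_rows_gen by blast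
  then have "vec.dim (rows X) = CARD('n)"
    by (metis vec.dim_span vec_dim_card)
  then show ?thesis unfolding row_rank_def_gen by simp
qed

lemma rows_eqI: "(\<And>i. row i X = row i Y) \<Longrightarrow> X = Y"
  by (simp add: vec_eq_iff row_def)

definition Emat :: "'n::finite set \<Rightarrow> 'k::field^'n^'n" where
  "Emat S = (\<chi> i j. if i = j \<and> i \<in> S then 1 else 0)"

lemma construct_E:
  fixes h :: "'k::field^'n::finite^'n" and S :: "'n set"
  assumes "card S \<le> rank h"
  shows "\<exists>A B. A ** h ** B = Emat S"
proof -
  obtain Bs where Bs: "Bs \<subseteq> rows h" "vec.independent Bs" "rows h \<subseteq> vec.span Bs" "card Bs = vec.dim (rows h)"
    by (rule vec.basis_exists)
  have "card S \<le> card Bs" using assms Bs(4) unfolding row_rank_def_gen by simp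
  then obtain Cs where Cs: "Cs \<subseteq> Bs" "card Cs = card S" "finite Cs"
    by (rule obtain_subset_with_card_n)
  have indC: "vec.independent Cs" using vec.independent_mono[OF Bs(2) Cs(1)] .
  have finS: "finite S" by simp
  have "\<exists>f. bij_betw f S Cs" using finite_same_card_bij[OF finS Cs(3)] Cs(2) by simp
  then obtain f where f: "bij_betw f S Cs" ..
  define kx where "kx c = (SOME k. row k h = c)" for c
  have kx: "row (kx c) h = c" if "c \<in> Cs" for c
  proof -
    have "\<exists>k. row k h = c" using that Cs(1) Bs(1) by (auto simp: rows_def)
    then show ?thesis unfolding kx_def by (rule someI_ex)
  qed
  have "\<exists>g. Vector_Spaces.linear (*s) (*s) g \<and> (\<forall>c\<in>Cs. g c = (axis (inv_into S f c) 1 :: 'k^'n))"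
    by (rule vec.linear_independent_extend[OF indC])
  then obtain g where g: "Vector_Spaces.linear (*s) (*s) g"
    "\<forall>c\<in>Cs. g c = (axis (inv_into S f c) 1 :: 'k^'n)" by blast
  define A :: "'k^'n^'n" where "A = (\<chi> i k. if i \<in> S \<and> k = kx (f i) then 1 else 0)"
  define B :: "'k^'n^'n" where "B = transpose (matrix g)"
  have rowAh: "row i (A ** h) = (if i \<in> S then f i else 0)" for i
  proof (cases "i \<in> S")
    case True
    have "row i (A ** h) = (\<Sum>k\<in>UNIV. (if k = kx (f i) then 1 else 0) *s row k h)"
      unfolding row_mult_left using True by (simp add: A_def)
    also have "\<dots> = (\<Sum>k\<in>UNIV. if k = kx (f i) then row k h else 0)"
      by (rule sum.cong) auto
    also have "\<dots> = row (kx (f i)) h"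
      by simp
    also have "\<dots> = f i" using kx[OF bij_betw_apply[OF f True]] by simp
    finally show ?thesis using True by simp
  next
    case False
    then show ?thesis unfolding row_mult_left by (simp add: A_def)
  qed
  have "A ** h ** B = Emat S"
  proof -
    have "row i (A ** h ** B) = row i (Emat S :: 'k^'n^'n)" for i
    proof -
      have "row i (A ** h ** B) = g (row i (A ** h))"
        unfolding row_mult_right B_def transpose_transpose using matrix_works[OF g(1)] by simp
      also have "\<dots> = (if i \<in> S then axis i 1 else 0)"
      proof (cases "i \<in> S")
        case True
        then have "f i \<in> Cs" using bij_betw_apply[OF f True] by simp
        moreover have "inv_into S f (f i) = i" using bij_betw_inv_into_left[OF f True] by simp
        ultimately show ?thesis using g(2) True by (simp add: rowAh)
      next
        case False
        then show ?thesis using rowAh vec.linear_0[OF g(1)] by simp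
      qed
      also have "\<dots> = row i (Emat S)"
        by (cases "i \<in> S") (simp_all add: vec_eq_iff row_def Emat_def axis_def)
      finally show ?thesis .
    qed
    then show ?thesis by (rule rows_eqI)
  qed
  then show ?thesis by blast
qed



lemma Emat_mv: "Emat S *v (x::'k::field^'n::finite) = (\<chi> i. if i \<in> S then x$i else 0)"
proof -
  have "(\<Sum>j\<in>UNIV. (if i = j \<and> i \<in> S then 1 else 0) * x $ j) = (if i \<in> S then x$i else 0)" for i
  proof -
    have "(\<Sum>j\<in>UNIV. (if i = j \<and> i \<in> S then 1 else 0) * x $ j)
        = (\<Sum>j\<in>UNIV. if j = i then (if i \<in> S then x$i else 0) else 0)"
      by (rule sum.cong) auto
    then show ?thesis by simp
  qed
  then show ?thesis by (simp add: vec_eq_iff matrix_vector_mult_def Emat_def)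
qed

lemma Emat_idem: "Emat S *v (Emat S *v (x::'k::field^'n::finite)) = Emat S *v x"
  by (simp add: Emat_mv vec_eq_iff)

lemma Emat_axis: "i \<in> S \<Longrightarrow> Emat S *v axis i (1::'k::field) = (axis i 1 :: 'k^'n::finite)"
  by (simp add: Emat_mv vec_eq_iff axis_def)

lemma dim_ker_bound:
  fixes h :: "'k::field^'n::finite^'n"
  assumes W: "vec.subspace W" and hW: "\<forall>w\<in>W. h *v w = 0"
  shows "vec.dim W + rank h \<le> CARD('n)"
proof -
  have "rank h \<le> card (UNIV::'n set)" using rank_le_card[of h] by simp
  then obtain S :: "'n set" where S: "S \<subseteq> UNIV" "card S = rank h" "finite S"
    by (rule obtain_subset_with_card_n)
  obtain A B where AB: "A ** h ** B = Emat S" using construct_E[of S h] S by auto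
  define E :: "'k^'n^'n" where "E = Emat S"
  define U where "U = (\<lambda>x. (B ** E) *v x) ` UNIV"
  have subU: "vec.subspace U" unfolding U_def by (rule vec.subspace_image[OF vec.subspace_UNIV])
  have key: "(A ** h) *v ((B ** E) *v x) = E *v x" for x
  proof -
    have "(A ** h) *v ((B ** E) *v x) = (A ** h ** B) *v (E *v x)"
      by (simp add: matrix_vector_mul_assoc matrix_mul_assoc)
    also have "\<dots> = E *v x" using AB Emat_idem unfolding E_def by metis
    finally show ?thesis .
  qed
  have inter: "W \<inter> U \<subseteq> {0}"
  proof
    fix u assume u: "u \<in> W \<inter> U"
    then obtain x where x: "u = (B ** E) *v x" unfolding U_def by auto
    have "h *v u = 0" using u hW by auto
    then have "(A ** h) *v u = 0" by (simp add: matrix_vector_mul_assoc[symmetric])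
    then have "E *v x = 0" using key x by simp
    then have "u = 0" using x by (simp add: matrix_vector_mul_assoc[symmetric])
    then show "u \<in> {0}" by simp
  qed
  have dimU: "card S \<le> vec.dim U"
  proof -
    have sub: "(\<lambda>i. axis i (1::'k)) ` S \<subseteq> (\<lambda>x. (A ** h) *v x) ` U"
    proof
      fix y assume "y \<in> (\<lambda>i. axis i (1::'k)) ` S"
      then obtain i where i: "i \<in> S" "y = axis i 1" by auto
      have "y = (A ** h) *v ((B ** E) *v axis i 1)"
        using key Emat_axis[OF i(1)] i(2) unfolding E_def by metis
      then show "y \<in> (\<lambda>x. (A ** h) *v x) ` U" unfolding U_def by auto
    qed
    have ind: "vec.independent ((\<lambda>i. axis i (1::'k)) ` S :: ('k^'n) set)"
      by (rule vec.independent_mono[OF independent_cart_basis]) (auto simp: cart_basis_def)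
    have "card ((\<lambda>i. axis i (1::'k)) ` S :: ('k^'n) set) = card S"
      by (rule card_image) (auto simp: inj_on_def axis_eq_axis)
    then have "card S \<le> vec.dim ((\<lambda>x. (A ** h) *v x) ` U)"
      using vec.independent_card_le_dim[OF sub ind] by simp
    also have "\<dots> \<le> vec.dim U"
      by (rule vec.dim_image_le[OF matrix_vector_mul_linear_gen])
    finally show ?thesis .
  qed
  have "vec.dim {x + y |x y. x \<in> W \<and> y \<in> U} + vec.dim (W \<inter> U) = vec.dim W + vec.dim U"
    by (rule vec.dim_sums_Int[OF W subU])
  moreover have "vec.dim (W \<inter> U) = 0" using inter by (simp add: vec.dim_eq_0)
  moreover have "vec.dim {x + y |x y. x \<in> W \<and> y \<in> U} \<le> CARD('n)"
    by (rule dim_subset_UNIV_cart_gen)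
  ultimately show ?thesis using dimU S(2) by linarith
qed

lemma rank_N:
  fixes S :: "'n::finite set"
  shows "rank (mat 1 - Emat S :: 'k::field^'n^'n) \<le> CARD('n) - card S"
proof -
  let ?N = "mat 1 - Emat S :: 'k::field^'n^'n"
  have "rows ?N \<subseteq> vec.span ((\<lambda>i. axis i (1::'k)) ` (UNIV - S))"
  proof
    fix r assume "r \<in> rows ?N"
    then obtain i where r: "r = row i ?N" by (auto simp: rows_def)
    have "r = (if i \<in> S then 0 else axis i 1)"
      unfolding r by (auto simp: vec_eq_iff row_def Emat_def mat_def axis_def)
    then show "r \<in> vec.span ((\<lambda>i. axis i (1::'k)) ` (UNIV - S))"
      by (auto intro: vec.span_base vec.span_zero)
  qed
  then have "vec.dim (rows ?N) \<le> card ((\<lambda>i. axis i (1::'k)) ` (UNIV - S) :: ('k^'n) set)"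
    by (rule vec.dim_le_card) simp
  also have "\<dots> \<le> card (UNIV - S)" by (rule card_image_le) simp
  also have "\<dots> = CARD('n) - card S" by (simp add: card_Diff_subset)
  finally show ?thesis unfolding row_rank_def_gen .
qed

context lf_cont
begin

lemma closed_rank_less: "closed {g::'k^'n::finite^'n. rank g < r}"
proof (cases "r \<le> CARD('n)")
  case False
  then have "{g::'k^'n^'n. rank g < r} = UNIV" using rank_le_card[where 'k='k and 'n='n and 'm='n]
    by (auto simp: not_le intro: le_less_trans)
  then show ?thesis by simp
next
  case True
  then have "r \<le> card (UNIV::'n set)" by simp
  then obtain S :: "'n set" where S: "S \<subseteq> UNIV" "card S = r" "finite S"
    by (rule obtain_subset_with_card_n)
  define N :: "'k^'n^'n" where "N = mat 1 - Emat S"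
  have "{g::'k^'n^'n. rank g < r} = (\<Inter>AB\<in>UNIV. {g. det (fst AB ** g ** snd AB + N) = 0})"
  proof (intro equalityI subsetI)
    fix g :: "'k^'n^'n" assume g: "g \<in> {g. rank g < r}"
    show "g \<in> (\<Inter>AB\<in>UNIV. {g. det (fst AB ** g ** snd AB + N) = 0})"
    proof (clarsimp, rule ccontr)
      fix A B :: "'k^'n^'n"
      assume "det (A ** g ** B + N) \<noteq> 0"
      then have "CARD('n) \<le> rank (A ** g ** B + N)" by (rule rank_full_if_det)
      also have "\<dots> \<le> rank (A ** g ** B) + rank N" by (rule rank_add_gen)
      also have "rank (A ** g ** B) \<le> rank g"
        using rank_mul_right_gen[of "A ** g" B] rank_mul_left_gen[of A g] by linarith
      also have "rank N \<le> CARD('n) - r" unfolding N_def using rank_N[of S] S(2) by simp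
      finally show False using g True by simp
    qed
  next
    fix g :: "'k^'n^'n" assume g: "g \<in> (\<Inter>AB\<in>UNIV. {g. det (fst AB ** g ** snd AB + N) = 0})"
    show "g \<in> {g. rank g < r}"
    proof (rule ccontr)
      assume "g \<notin> {g. rank g < r}"
      then have "card S \<le> rank g" using S by simp
      then obtain A B where AB: "A ** g ** B = Emat S" using construct_E by blast
      have "A ** g ** B + N = mat 1" unfolding AB N_def by simp
      then have "det (fst (A, B) ** g ** snd (A, B) + N) = 1" by (simp add: det_I)
      moreover have "det (fst (A, B) ** g ** snd (A, B) + N) = 0" using g by blast
      ultimately show False by simp
    qed
  qed
  then show ?thesis by (auto intro!: closed_INT closed_det)
qed

end



lemma sets_mcp: "sets (mat_conv_pow \<nu> n) = sets borel"
  by (cases n) simp_all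

lemma space_mcp: "space (mat_conv_pow \<nu> n) = UNIV"
  using sets_eq_imp_space_eq[OF sets_mcp[of \<nu> n]] by simp

lemma emeasure_measure_of_le:
  "emeasure (measure_of \<Omega> A \<mu>) B \<le> \<mu> B"
  by (simp add: emeasure_measure_of_conv)

lemma emeasure_pair_space_le:
  "emeasure (M \<Otimes>\<^sub>M N) (space (M \<Otimes>\<^sub>M N)) \<le> emeasure N (space N) * emeasure M (space M)"
proof -
  have "emeasure (M \<Otimes>\<^sub>M N) (space (M \<Otimes>\<^sub>M N))
      \<le> (\<integral>\<^sup>+ x. \<integral>\<^sup>+ y. indicator (space (M \<Otimes>\<^sub>M N)) (x, y) \<partial>N \<partial>M)"
    unfolding pair_measure_def[of M N] by (rule emeasure_measure_of_le)
  also have "\<dots> \<le> (\<integral>\<^sup>+ x. \<integral>\<^sup>+ y. 1 \<partial>N \<partial>M)"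
    by (intro nn_integral_mono) (simp add: indicator_def)
  also have "\<dots> = emeasure N (space N) * emeasure M (space M)"
    by (simp add: nn_integral_const)
  finally show ?thesis .
qed

lemma emeasure_mcp_le:
  assumes "prob_space \<nu>"
  shows "emeasure (mat_conv_pow \<nu> n) (space (mat_conv_pow \<nu> n)) \<le> 1"
proof (induction n)
  case 0
  then show ?case by (simp add: emeasure_return)
next
  case (Suc n)
  let ?M = "mat_conv_pow \<nu> n"
  let ?f = "\<lambda>(g::('a,'b) vec ^'b, h). g ** h"
  have "emeasure (mat_conv_pow \<nu> (Suc n)) (space (mat_conv_pow \<nu> (Suc n)))
      = emeasure (distr (?M \<Otimes>\<^sub>M \<nu>) borel ?f) (space (distr (?M \<Otimes>\<^sub>M \<nu>) borel ?f))"
    by simp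
  also have "\<dots> \<le> emeasure (?M \<Otimes>\<^sub>M \<nu>) (?f -` (space (distr (?M \<Otimes>\<^sub>M \<nu>) borel ?f)) \<inter> space (?M \<Otimes>\<^sub>M \<nu>))"
    unfolding distr_def[of "?M \<Otimes>\<^sub>M \<nu>" borel ?f] by (rule emeasure_measure_of_le)
  also have "\<dots> \<le> emeasure (?M \<Otimes>\<^sub>M \<nu>) (space (?M \<Otimes>\<^sub>M \<nu>))"
    by (rule emeasure_space)
  also have "\<dots> \<le> emeasure \<nu> (space \<nu>) * emeasure ?M (space ?M)"
    by (rule emeasure_pair_space_le)
  also have "\<dots> \<le> 1 * 1"
    using Suc prob_space.emeasure_space_1[OF assms] by (intro mult_mono) auto
  finally show ?case by simp
qed

lemma finite_mcp:
  assumes "prob_space \<nu>"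
  shows "finite_measure (mat_conv_pow \<nu> n)"
  using emeasure_mcp_le[OF assms, of n] by (intro finite_measureI) (auto simp: top_unique)

lemma countable_ae_disjoint:
  fixes M :: "'a measure" and X :: "'b \<Rightarrow> 'a set"
  assumes fin: "finite_measure M" and meas: "\<forall>x\<in>F. X x \<in> sets M"
    and pos: "\<forall>x\<in>F. emeasure M (X x) > 0"
    and dis: "\<forall>x\<in>F. \<forall>y\<in>F. x \<noteq> y \<longrightarrow> emeasure M (X x \<inter> X y) = 0"
  shows "countable F"
proof -
  interpret finite_measure M by fact
  define Fm where "Fm m = {x\<in>F. inverse (real (Suc m)) < measure M (X x)}" for m
  have F: "F = (\<Union>m. Fm m)"
  proof (intro equalityI subsetI)
    fix x assume x: "x \<in> F"
    then have "0 < measure M (X x)" using pos by (simp add: emeasure_eq_measure)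
    then obtain m where "inverse (real (Suc m)) < measure M (X x)"
      using reals_Archimedean by blast
    then show "x \<in> (\<Union>m. Fm m)" using x by (auto simp: Fm_def)
  qed (auto simp: Fm_def)
  have "finite (Fm m)" for m
  proof -
    let ?C = "nat (ceiling (measure M (space M) * real (Suc m)))"
    have "card G \<le> ?C" if G: "G \<subseteq> Fm m" "finite G" for G
    proof -
      define I where "I = {p. fst p \<in> G \<and> snd p \<in> G \<and> fst p \<noteq> snd p}"
      define Z where "Z = (\<Union>p\<in>I. X (fst p) \<inter> X (snd p))"
      have "I \<subseteq> G \<times> G" by (auto simp: I_def)
      then have "finite I" using G(2) by (meson finite_SigmaI finite_subset)
      have GF: "G \<subseteq> F" using G by (auto simp: Fm_def)
      have Z: "Z \<in> null_sets M" unfolding Z_def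
      proof (rule null_sets_UN')
        show "countable I" using \<open>finite I\<close> by (rule countable_finite)
        fix p assume "p \<in> I"
        then have "fst p \<in> F" "snd p \<in> F" "fst p \<noteq> snd p" using GF by (auto simp: I_def)
        then show "X (fst p) \<inter> X (snd p) \<in> null_sets M"
          using meas dis by (intro null_setsI) auto
      qed
      define Y where "Y x = X x - Z" for x
      have YM: "Y ` G \<subseteq> sets M" using GF meas Z by (auto simp: Y_def)
      have disj: "disjoint_family_on Y G"
        unfolding disjoint_family_on_def Y_def Z_def I_def by fastforce
      have mY: "measure M (Y x) = measure M (X x)" if "x \<in> G" for x
        unfolding Y_def using that GF meas Z by (intro measure_Diff_null_set) auto
      have "real (card G) * inverse (real (Suc m)) \<le> (\<Sum>x\<in>G. measure M (Y x))"
        using G by (intro sum_bounded_below) (auto simp: mY Fm_def less_imp_le)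
      also have "\<dots> = measure M (\<Union>x\<in>G. Y x)"
        using finite_measure_finite_Union[OF G(2) YM disj] by simp
      also have "\<dots> \<le> measure M (space M)" by (rule bounded_measure)
      finally have "real (card G) * inverse (real (Suc m)) \<le> measure M (space M)" .
      then have "real (card G) \<le> measure M (space M) * real (Suc m)"
        by (simp add: field_simps)
      then show ?thesis by linarith
    qed
    then show ?thesis using finite_if_finite_subsets_card_bdd by blast
  qed
  then have "countable (\<Union>m. Fm m)"
    by (simp add: countable_finite)
  then show ?thesis using F by simp
qed



theorem proposition3p5:
  fixes \<nu> :: "('k::{field,t2_space,second_countable_topology} ^'n::finite^'n) measure"
  assumes "local_field TYPE('k)"
    and "CARD('n) \<ge> 2"
    and "prob_space \<nu>"
    and "sets \<nu> = sets borel"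
  shows "\<exists>\<W> :: ('k^'n) set set. countable \<W> \<and>
           (\<forall>W\<in>\<W>. vec.subspace W \<and> vec.dim W \<le> CARD('n) - lower_rank \<nu>) \<and>
           lower_ker \<nu> = \<Union>\<W>"
proof -
  interpret lf_cont "TYPE('k)" using lf_contI assms(1) .
  define mu where "mu = mat_conv_pow \<nu>"
  define Aset where "Aset V = {h::'k^'n^'n. \<forall>v\<in>V. h *v v = 0}" for V
  have Aclosed: "closed (Aset V)" for V
  proof -
    have "Aset V = (\<Inter>v\<in>V. {h. h *v v = 0})" by (auto simp: Aset_def)
    then show ?thesis by (auto intro!: closed_INT closed_ker)
  qed
  have Ameas: "Aset V \<in> sets (mu n)" for V n
    unfolding mu_def sets_mcp using Aclosed by (rule borel_closed)
  have kmeas: "{h::'k^'n^'n. h *v v = 0} \<in> sets (mu n)" for v n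
    unfolding mu_def sets_mcp using closed_ker by (rule borel_closed)
  have rmeas: "{g::'k^'n^'n. rank g < r} \<in> sets (mu n)" for r n
    unfolding mu_def sets_mcp using closed_rank_less by (rule borel_closed)
  have fin: "finite_measure (mu n)" for n unfolding mu_def by (rule finite_mcp[OF assms(3)])
  have Aspan: "Aset (vec.span T) = Aset T" for T
  proof
    show "Aset (vec.span T) \<subseteq> Aset T" unfolding Aset_def using vec.span_superset by blast
    show "Aset T \<subseteq> Aset (vec.span T)"
    proof
      fix h assume h: "h \<in> Aset T"
      have "vec.span T \<subseteq> {x. h *v x = 0}"
        using h by (intro vec.span_minimal vec.subspace_kernel) (auto simp: Aset_def)
      then show "h \<in> Aset (vec.span T)" by (auto simp: Aset_def)
    qed
  qed
  define Q where "Q r = (\<forall>n. emeasure (mu n) {g::'k^'n^'n. rank g < r} = 0)" for r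
  have Qr: "Q (lower_rank \<nu>)"
  proof -
    have "lower_rank \<nu> = Greatest Q" unfolding lower_rank_def Q_def mu_def by simp
    moreover have "Q (Greatest Q)"
    proof (rule GreatestI_nat[of Q 0 "CARD('n)"])
      show "Q 0" by (simp add: Q_def)
      fix y assume Qy: "Q y"
      show "y \<le> CARD('n)"
      proof (rule ccontr)
        assume "\<not> y \<le> CARD('n)"
        then have "{g::'k^'n^'n. rank g < y} = UNIV"
          using rank_le_card[where 'k='k and 'n='n and 'm='n] by (auto simp: not_le intro: le_less_trans)
        moreover have "emeasure (mu 0) UNIV = 1" by (simp add: mu_def emeasure_return)
        ultimately show False using Qy unfolding Q_def by (metis zero_neq_one)
      qed
    qed
    ultimately show ?thesis by simp
  qed
  define Fam where "Fam n = {V. vec.subspace V \<and> emeasure (mu n) (Aset V) > 0 \<and>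
      (\<forall>V'. vec.subspace V' \<and> V \<subset> V' \<longrightarrow> emeasure (mu n) (Aset V') = 0)}" for n
  define WW where "WW = (\<Union>n. Fam n)"
  have cnt: "countable (Fam n)" for n
  proof (rule countable_ae_disjoint[OF fin[of n], where X = Aset])
    show "\<forall>x\<in>Fam n. Aset x \<in> sets (mu n)" using Ameas by blast
    show "\<forall>x\<in>Fam n. 0 < emeasure (mu n) (Aset x)" by (auto simp: Fam_def)
    show "\<forall>x\<in>Fam n. \<forall>y\<in>Fam n. x \<noteq> y \<longrightarrow> emeasure (mu n) (Aset x \<inter> Aset y) = 0"
    proof (intro ballI impI)
      fix V1 V2 assume V1: "V1 \<in> Fam n" and V2: "V2 \<in> Fam n" and ne: "V1 \<noteq> V2"
      have "\<not> V2 \<subseteq> V1"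
      proof
        assume "V2 \<subseteq> V1"
        then have "V2 \<subset> V1" using ne by auto
        then show False using V1 V2 by (auto simp: Fam_def)
      qed
      then have psub: "V1 \<subset> vec.span (V1 \<union> V2)"
        using vec.span_superset[of "V1 \<union> V2"] by auto
      have "Aset V1 \<inter> Aset V2 = Aset (vec.span (V1 \<union> V2))"
        unfolding Aspan by (auto simp: Aset_def)
      moreover have "emeasure (mu n) (Aset (vec.span (V1 \<union> V2))) = 0"
        using V1 psub vec.subspace_span unfolding Fam_def by blast
      ultimately show "emeasure (mu n) (Aset V1 \<inter> Aset V2) = 0" by simp
    qed
  qed
  show ?thesis
  proof (intro exI[of _ WW] conjI ballI)
    show "countable WW" unfolding WW_def using cnt by simp
  next
    fix W assume "W \<in> WW"
    then obtain n where W: "W \<in> Fam n" unfolding WW_def by auto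
    then show "vec.subspace W" by (simp add: Fam_def)
    show "vec.dim W \<le> CARD('n) - lower_rank \<nu>"
    proof (rule ccontr)
      assume big: "\<not> vec.dim W \<le> CARD('n) - lower_rank \<nu>"
      have "Aset W \<subseteq> {g. rank g < lower_rank \<nu>}"
      proof
        fix h assume "h \<in> Aset W"
        then have "vec.dim W + rank h \<le> CARD('n)"
          using W by (intro dim_ker_bound) (auto simp: Fam_def Aset_def)
        then show "h \<in> {g. rank g < lower_rank \<nu>}" using big by simp
      qed
      then have "emeasure (mu n) (Aset W) \<le> emeasure (mu n) {g. rank g < lower_rank \<nu>}"
        using rmeas by (rule emeasure_mono)
      also have "\<dots> = 0" using Qr by (simp add: Q_def)
      finally show False using W by (simp add: Fam_def)
    qed
  next
    show "lower_ker \<nu> = \<Union>WW"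
    proof (intro equalityI subsetI)
      fix v assume "v \<in> lower_ker \<nu>"
      then obtain n where n: "emeasure (mu n) {h. h *v v = 0} > 0"
        unfolding lower_ker_def mu_def by auto
      define P where "P V = (vec.subspace V \<and> v \<in> V \<and> emeasure (mu n) (Aset V) > 0)" for V
      have "Aset {v} = {h. h *v v = 0}" by (simp add: Aset_def)
      then have "P (vec.span {v})"
        using n unfolding P_def Aspan by (auto intro: vec.span_base)
      moreover have "\<forall>V. P V \<longrightarrow> vec.dim V < Suc (CARD('n))"
        using dim_subset_UNIV_cart_gen less_Suc_eq_le by blast
      ultimately obtain V where V: "P V" and Vmax: "\<forall>V'. P V' \<longrightarrow> vec.dim V' \<le> vec.dim V"
        using ex_has_greatest_nat[of P _ vec.dim] by blast
      have "V \<in> Fam n"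
        unfolding Fam_def
      proof (intro CollectI conjI allI impI)
        show "vec.subspace V" "emeasure (mu n) (Aset V) > 0" using V by (auto simp: P_def)
        fix V' assume V': "vec.subspace V' \<and> V \<subset> V'"
        show "emeasure (mu n) (Aset V') = 0"
        proof (rule ccontr)
          assume "emeasure (mu n) (Aset V') \<noteq> 0"
          then have "emeasure (mu n) (Aset V') > 0" using not_gr_zero by blast
          then have "P V'" using V V' by (auto simp: P_def)
          then have "vec.dim V' \<le> vec.dim V" using Vmax by blast
          moreover have "vec.dim V < vec.dim V'"
          proof -
            have e1: "vec.span V = V" using V by (simp add: P_def vec.span_eq_iff)
            have e2: "vec.span V' = V'" using V' by (simp add: vec.span_eq_iff)
            have "vec.span V \<subset> vec.span V'" unfolding e1 e2 using V' by simp
            then show ?thesis by (rule vec.dim_psubset)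
          qed
          ultimately show False by simp
        qed
      qed
      then show "v \<in> \<Union>WW" using V unfolding WW_def P_def by auto
    next
      fix v assume "v \<in> \<Union>WW"
      then obtain n W where W: "W \<in> Fam n" "v \<in> W" unfolding WW_def by auto
      have "Aset W \<subseteq> {h. h *v v = 0}" using W(2) by (auto simp: Aset_def)
      then have "emeasure (mu n) (Aset W) \<le> emeasure (mu n) {h. h *v v = 0}"
        using kmeas by (rule emeasure_mono)
      then have "emeasure (mu n) {h. h *v v = 0} > 0" using W(1) by (auto simp: Fam_def)
      then show "v \<in> lower_ker \<nu>" unfolding lower_ker_def mu_def by auto
    qed
  qed
qed


end
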